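(* Let $n\ge2$ and let $\Phi:[n]\times[n-1]\times\cdots\times[2]\to\mathfrak S_n$, $\Phi(j_n,\dots,j_2)=\tau(j_2,2)\tau(j_3,3)\cdots\tau(j_n,n)$. If two sequences $s,s'$ differ in exactly one coordinate, then $\Phi(s')=\Phi(s)\,\sigma$ for some $\sigma\in\mathfrak S_n$ that is either a transposition or a $3$-cycle. If moreover both $s,s'$ satisfy $j_k\le k-1$ for all $k$ (so $\Phi(s),\Phi(s')\in\mathcal C_n$), then $\sigma$ is a $3$-cycle. Consequently, any listing of $[n-1]\times[n-2]\times\cdots\times[1]$ in which consecutive words differ in exactly one coordinate is mapped by $\Phi$ to a listing of all of $\mathcal C_n$ (each once) in which each element is obtained from the previous one by right multiplication by a $3$-cycle.
   Context: $[n]=\{1,\dots,n\}$, $\mathfrak S_n$ the symmetric group on $[n]$, right action, products composed left to right ($i(\sigma\rho)=(i\sigma)\rho$); $\tau(i,j)$ the transposition exchanging $i,j$, with $\tau(k,k)$ the identity. $\mathcal C_n$ is the set of $n$-cycles in $\mathfrak S_n$. $\Phi$ is a bijection onto $\mathfrak S_n$ and restricts to a bijection from $[n-1]\times\cdots\times[1]$ (sequences with $j_k\le k-1$) onto $\mathcal C_n$. *)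

theory Defs
  imports "HOL-Combinatorics.Combinatorics"
begin

text \<open>The paper uses
 right actions with products composed left to right, i(\<sigma>\<rho>) = (i\<sigma>)\<rho>; hence the
 paper's product \<sigma>\<rho> is the function \<rho> \<circ> \<sigma>.\<close>

fun Phi :: "nat \<Rightarrow> (nat \<Rightarrow> nat) \<Rightarrow> nat \<Rightarrow> nat" where
  "Phi 0 s = id"
| "Phi (Suc 0) s = id"
| "Phi (Suc (Suc m)) s = Transposition.transpose (s (Suc (Suc m))) (Suc (Suc m)) \<circ> Phi (Suc m) s"

definition is_kcycle :: "nat \<Rightarrow> nat \<Rightarrow> (nat \<Rightarrow> nat) \<Rightarrow> bool" where
  "is_kcycle n k \<sigma> \<longleftrightarrow> (\<exists>xs. length xs = k \<and> distinct xs \<and> set xs \<subseteq> {1..n} \<and> \<sigma> = cycle_of_list xs)"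

definition ncycles :: "nat \<Rightarrow> (nat \<Rightarrow> nat) set" where
  "ncycles n = {\<sigma>. \<sigma> permutes {1..n} \<and> is_kcycle n n \<sigma>}"

definition Seqs :: "nat \<Rightarrow> (nat \<Rightarrow> nat) set" where
  "Seqs n = {s. (\<forall>k\<in>{2..n}. 1 \<le> s k \<and> s k \<le> k) \<and> (\<forall>k. k \<notin> {2..n} \<longrightarrow> s k = 0)}"

definition CycSeqs :: "nat \<Rightarrow> (nat \<Rightarrow> nat) set" where
  "CycSeqs n = {s. (\<forall>k\<in>{2..n}. 1 \<le> s k \<and> s k \<le> k - 1) \<and> (\<forall>k. k \<notin> {2..n} \<longrightarrow> s k = 0)}"

definition differ_one :: "nat \<Rightarrow> (nat \<Rightarrow> nat) \<Rightarrow> (nat \<Rightarrow> nat) \<Rightarrow> bool" where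
  "differ_one n s s' \<longleftrightarrow> card {k\<in>{2..n}. s k \<noteq> s' k} = 1"

end

theory Submission imports Defs begin

abbreviation T where "T \<equiv> Transposition.transpose"

lemma Phi_Suc: "1 \<le> n \<Longrightarrow> Phi (Suc n) s = T (s (Suc n)) (Suc n) \<circ> Phi n s"
  by (cases n) auto

lemma Phi_cong: "(\<forall>k\<in>{2..n}. s k = s' k) \<Longrightarrow> Phi n s = Phi n s'"
  by (induction n s rule: Phi.induct) (auto simp: fun_eq_iff)

lemma Phi_permutes: "(\<forall>k\<in>{2..n}. 1 \<le> s k \<and> s k \<le> k) \<Longrightarrow> Phi n s permutes {1..n}"
proof (induction n s rule: Phi.induct)
  case (1 s) then show ?case by (simp add: permutes_def)
next
  case (2 s) then show ?case by (simp add: permutes_def)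
next
  case (3 m s)
  have a: "Phi (Suc m) s permutes {1..Suc (Suc m)}"
    using 3 by (intro permutes_subset[OF 3(1)]) auto
  have b: "T (s (Suc (Suc m))) (Suc (Suc m)) permutes {1..Suc (Suc m)}"
    using 3(2) by (intro permutes_swap_id) auto
  show ?case using permutes_compose[OF a b] by (simp only: Phi.simps)
qed

lemma Phi_inj: "(\<forall>k\<in>{2..n}. 1 \<le> s k \<and> s k \<le> k) \<Longrightarrow> (\<forall>k\<in>{2..n}. 1 \<le> s' k \<and> s' k \<le> k)
   \<Longrightarrow> Phi n s = Phi n s' \<Longrightarrow> \<forall>k\<in>{2..n}. s k = s' k"
proof (induction n)
  case 0 then show ?case by simp
next
  case (Suc n)
  show ?case
  proof (cases "n = 0")
    case True then show ?thesis by simp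
  next
    case False
    have p1: "Phi n s permutes {1..n}" using Suc.prems by (intro Phi_permutes) auto
    have p2: "Phi n s' permutes {1..n}" using Suc.prems by (intro Phi_permutes) auto
    have f1: "Phi n s (Suc n) = Suc n" using permutes_not_in[OF p1] by simp
    have f2: "Phi n s' (Suc n) = Suc n" using permutes_not_in[OF p2] by simp
    have e: "T (s (Suc n)) (Suc n) \<circ> Phi n s = T (s' (Suc n)) (Suc n) \<circ> Phi n s'"
      using Suc.prems(3) Phi_Suc[of n s] Phi_Suc[of n s'] False by (metis One_nat_def Suc_leI neq0_conv)
    have "(T (s (Suc n)) (Suc n) \<circ> Phi n s) (Suc n) = s (Suc n)" using f1 by simp
    moreover have "(T (s' (Suc n)) (Suc n) \<circ> Phi n s') (Suc n) = s' (Suc n)" using f2 by simp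
    ultimately have eq: "s (Suc n) = s' (Suc n)" using e by simp
    have "T (s (Suc n)) (Suc n) \<circ> (T (s (Suc n)) (Suc n) \<circ> Phi n s)
        = T (s (Suc n)) (Suc n) \<circ> (T (s (Suc n)) (Suc n) \<circ> Phi n s')" using e eq by simp
    then have "Phi n s = Phi n s'" by (simp add: comp_assoc[symmetric])
    then have "\<forall>k\<in>{2..n}. s k = s' k" using Suc.IH Suc.prems by auto
    then show ?thesis using eq by (auto simp: le_Suc_eq)
  qed
qed

lemma Phi_decomp: "2 \<le> k \<Longrightarrow> k \<le> n \<Longrightarrow> (\<forall>m\<in>{2..n}. 1 \<le> s m \<and> s m \<le> m) \<Longrightarrow> (\<forall>m. m \<noteq> k \<longrightarrow> s' m = s m)
  \<Longrightarrow> \<exists>A. A permutes {1..n} \<and> Phi n s' = A \<circ> T (s' k) k \<circ> T (s k) k \<circ> inv A \<circ> Phi n s"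
proof (induction n)
  case 0 then show ?case by simp
next
  case (Suc n)
  show ?case
  proof (cases "k = Suc n")
    case True
    have c: "Phi n s' = Phi n s" using Suc.prems True by (intro Phi_cong) auto
    have "Phi (Suc n) s' = T (s' k) k \<circ> T (s k) k \<circ> (T (s k) k \<circ> Phi n s)"
      using Phi_Suc[of n s'] c True Suc.prems(1) by (simp add: fun_eq_iff)
    also have "\<dots> = T (s' k) k \<circ> T (s k) k \<circ> Phi (Suc n) s"
      using Phi_Suc[of n s] True Suc.prems(1) by simp
    finally show ?thesis by (intro exI[of _ id]) (auto simp: permutes_def)
  next
    case False
    then have kn: "k \<le> n" using Suc.prems by simp
    have "\<forall>m\<in>{2..n}. 1 \<le> s m \<and> s m \<le> m" using Suc.prems(3) by auto
    from Suc.IH[OF Suc.prems(1) kn this Suc.prems(4)]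
    obtain A where A: "A permutes {1..n}" "Phi n s' = A \<circ> T (s' k) k \<circ> T (s k) k \<circ> inv A \<circ> Phi n s"
      by blast
    let ?t = "T (s (Suc n)) (Suc n)"
    have tp: "?t permutes {1..Suc n}" using Suc.prems(3) Suc.prems(1) kn by (intro permutes_swap_id) auto
    have Ap: "A permutes {1..Suc n}" by (rule permutes_subset[OF A(1)]) auto
    have n1: "1 \<le> n" using Suc.prems by simp
    have ss: "s' (Suc n) = s (Suc n)" using Suc.prems False by simp
    have inv: "inv (?t \<circ> A) = inv A \<circ> ?t"
      using o_inv_distrib[OF bij_transpose permutes_bij[OF A(1)]] by simp
    have "Phi (Suc n) s' = ?t \<circ> (A \<circ> T (s' k) k \<circ> T (s k) k \<circ> inv A \<circ> Phi n s)"
      using Phi_Suc[OF n1, of s'] ss A(2) by simp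
    also have "\<dots> = (?t \<circ> A) \<circ> T (s' k) k \<circ> T (s k) k \<circ> inv (?t \<circ> A) \<circ> (?t \<circ> Phi n s)"
      unfolding inv by (simp add: fun_eq_iff)
    also have "\<dots> = (?t \<circ> A) \<circ> T (s' k) k \<circ> T (s k) k \<circ> inv (?t \<circ> A) \<circ> Phi (Suc n) s"
      using Phi_Suc[OF n1, of s] by simp
    finally show ?thesis using permutes_compose[OF Ap tp] by blast
  qed
qed

lemma cycle_rotate1: "distinct cs \<Longrightarrow> cycle_of_list (rotate1 cs) = cycle_of_list cs"
proof -
  assume d: "distinct cs"
  have m1: "map (cycle_of_list cs) cs = rotate1 cs" using cyclic_rotation[of cs 1] d by simp
  have m2: "map (cycle_of_list (rotate1 cs)) (rotate1 cs) = rotate1 (rotate1 cs)"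
    using cyclic_rotation[of "rotate1 cs" 1] d by simp
  have m3: "map (cycle_of_list cs) (rotate1 cs) = rotate1 (rotate1 cs)"
    using m1 rotate1_map[of "cycle_of_list cs" cs] by simp
  show ?thesis
  proof
    fix x show "cycle_of_list (rotate1 cs) x = cycle_of_list cs x"
    proof (cases "x \<in> set cs")
      case True
      then have "x \<in> set (rotate1 cs)" by simp
      then show ?thesis using m2 m3 by (metis map_eq_conv)
    next
      case False then show ?thesis by (simp add: id_outside_supp)
    qed
  qed
qed

lemma cycle_rotate: "distinct cs \<Longrightarrow> cycle_of_list (rotate n cs) = cycle_of_list cs"
  by (induction n) (auto simp: cycle_rotate1)

lemma cycle_head: "distinct xs \<Longrightarrow> x \<in> set xs \<Longrightarrow>
  \<exists>ys. cycle_of_list (x#ys) = cycle_of_list xs \<and> set (x#ys) = set xs \<and> distinct (x#ys) \<and> length ys + 1 = length xs"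
proof -
  assume d: "distinct xs" and x: "x \<in> set xs"
  obtain as bs where xs: "xs = as @ x # bs" using split_list[OF x] by auto
  have "rotate (length as) xs = x # bs @ as" using xs by (simp add: rotate_append)
  then have "cycle_of_list (x # bs @ as) = cycle_of_list xs" using cycle_rotate[OF d] by metis
  then show ?thesis using d xs by (intro exI[of _ "bs @ as"]) auto
qed


lemma conj_cycle: "A permutes {1..n} \<Longrightarrow> distinct xs \<Longrightarrow> set xs \<subseteq> {1..n} \<Longrightarrow>
   A \<circ> cycle_of_list xs \<circ> inv A permutes {1..n} \<and> is_kcycle n (length xs) (A \<circ> cycle_of_list xs \<circ> inv A)"
proof -
  assume A: "A permutes {1..n}" and d: "distinct xs" and st: "set xs \<subseteq> {1..n}"
  have e: "A \<circ> cycle_of_list xs \<circ> inv A = cycle_of_list (map A xs)"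
    using conjugation_of_cycle[OF d permutes_bij[OF A]] .
  have d2: "distinct (map A xs)" using d permutes_inj[OF A] by (simp add: distinct_map inj_on_def)
  have s2: "set (map A xs) \<subseteq> {1..n}" using st permutes_in_image[OF A] by auto
  have "cycle_of_list (map A xs) permutes {1..n}" using permutes_subset[OF cycle_permutes s2] .
  moreover have "is_kcycle n (length xs) (cycle_of_list (map A xs))"
    unfolding is_kcycle_def using d2 s2 by (intro exI[of _ "map A xs"]) auto
  ultimately show ?thesis using e by simp
qed

lemma seq_bounds: "s \<in> Seqs n \<Longrightarrow> \<forall>m\<in>{2..n}. 1 \<le> s m \<and> s m \<le> m"
  unfolding Seqs_def by auto

lemma step_seq:
  assumes s: "s \<in> Seqs n" and s': "s' \<in> Seqs n" and df: "differ_one n s s'"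
  shows "\<exists>\<sigma> k. \<sigma> permutes {1..n} \<and> Phi n s' = \<sigma> \<circ> Phi n s \<and> (is_kcycle n 2 \<sigma> \<or> is_kcycle n 3 \<sigma>)
      \<and> k \<in> {2..n} \<and> (s k \<noteq> k \<and> s' k \<noteq> k \<longrightarrow> is_kcycle n 3 \<sigma>)"
proof -
  obtain k where K: "{k\<in>{2..n}. s k \<noteq> s' k} = {k}"
    using df unfolding differ_one_def by (auto simp: card_1_singleton_iff)
  have k: "k \<in> {2..n}" "s k \<noteq> s' k" using K by auto
  have oth: "\<forall>m. m \<noteq> k \<longrightarrow> s' m = s m"
  proof (intro allI impI)
    fix m assume "m \<noteq> k"
    show "s' m = s m"
    proof (cases "m \<in> {2..n}")
      case True
      show ?thesis
      proof (rule ccontr)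
        assume "s' m \<noteq> s m"
        then have "m \<in> {k\<in>{2..n}. s k \<noteq> s' k}" using True by auto
        then have "m \<in> {k}" unfolding K .
        then show False using \<open>m \<noteq> k\<close> by simp
      qed
    next
      case False then show ?thesis using s s' unfolding Seqs_def by auto
    qed
  qed
  obtain A where A: "A permutes {1..n}" "Phi n s' = A \<circ> T (s' k) k \<circ> T (s k) k \<circ> inv A \<circ> Phi n s"
    using Phi_decomp[of k n s s'] k seq_bounds[OF s] oth by auto
  define \<sigma> where "\<sigma> = A \<circ> T (s' k) k \<circ> T (s k) k \<circ> inv A"
  have ph: "Phi n s' = \<sigma> \<circ> Phi n s" using A(2) unfolding \<sigma>_def by (simp add: comp_assoc)
  have b1: "s k \<in> {1..n}" "s' k \<in> {1..n}" "k \<in> {1..n}"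
    using k bspec[OF seq_bounds[OF s] k(1)] bspec[OF seq_bounds[OF s'] k(1)] by auto
  show ?thesis
  proof (cases "s k = k")
    case True
    then have "\<sigma> = A \<circ> cycle_of_list [s' k, k] \<circ> inv A" unfolding \<sigma>_def by simp
    moreover have "distinct [s' k, k]" using True k by auto
    ultimately have "\<sigma> permutes {1..n} \<and> is_kcycle n 2 \<sigma>"
      using conj_cycle[OF A(1), of "[s' k, k]"] b1 by (simp add: numeral_2_eq_2 numeral_3_eq_3)
    then show ?thesis using ph k True by blast
  next
    case False
    show ?thesis
    proof (cases "s' k = k")
      case True
      then have "\<sigma> = A \<circ> cycle_of_list [s k, k] \<circ> inv A" unfolding \<sigma>_def by simp
      moreover have "distinct [s k, k]" using False by auto
      ultimately have "\<sigma> permutes {1..n} \<and> is_kcycle n 2 \<sigma>"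
        using conj_cycle[OF A(1), of "[s k, k]"] b1 by (simp add: numeral_2_eq_2 numeral_3_eq_3)
      then show ?thesis using ph k True by blast
    next
      case F2: False
      have "\<sigma> = A \<circ> cycle_of_list [s' k, k, s k] \<circ> inv A" unfolding \<sigma>_def
        by (simp add: transpose_commute comp_assoc)
      moreover have "distinct [s' k, k, s k]" using False F2 k by auto
      ultimately have "\<sigma> permutes {1..n} \<and> is_kcycle n 3 \<sigma>"
        using conj_cycle[OF A(1), of "[s' k, k, s k]"] b1 by (simp add: numeral_2_eq_2 numeral_3_eq_3)
      then show ?thesis using ph k by blast
    qed
  qed
qed

lemma ncycles_set: "c \<in> ncycles n \<Longrightarrow> \<exists>xs. distinct xs \<and> set xs = {1..n} \<and> length xs = n \<and> c = cycle_of_list xs"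
proof -
  assume "c \<in> ncycles n"
  then obtain xs where xs: "length xs = n" "distinct xs" "set xs \<subseteq> {1..n}" "c = cycle_of_list xs"
    unfolding ncycles_def is_kcycle_def by auto
  have "card (set xs) = n" using xs distinct_card by metis
  then have "set xs = {1..n}" using xs(3) by (intro card_subset_eq) auto
  then show ?thesis using xs by auto
qed

lemma mk_ncycle: "distinct xs \<Longrightarrow> set xs = {1..n} \<Longrightarrow> cycle_of_list xs \<in> ncycles n"
  unfolding ncycles_def is_kcycle_def
  using cycle_permutes[of xs] distinct_card[of xs] by auto

lemma Phi_image: "1 \<le> n \<Longrightarrow> Phi n ` CycSeqs n = ncycles n"
proof (induction n rule: nat_induct_at_least)
  case base
  have cs: "CycSeqs 1 = {\<lambda>_. 0}" unfolding CycSeqs_def by auto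
  have "ncycles 1 = {id}"
  proof
    show "ncycles 1 \<subseteq> {id}"
    proof
      fix c assume "c \<in> ncycles 1"
      then have "c permutes {1}" unfolding ncycles_def by simp
      then have "c = id" by simp
      then show "c \<in> {id}" by simp
    qed
    show "{id} \<subseteq> ncycles 1" using mk_ncycle[of "[1]" 1] by simp
  qed
  then show ?case using cs by (simp add: id_def)
next
  case (Suc n)
  have n1: "1 \<le> n" by fact
  show ?case
  proof
    show "Phi (Suc n) ` CycSeqs (Suc n) \<subseteq> ncycles (Suc n)"
    proof
      fix d assume "d \<in> Phi (Suc n) ` CycSeqs (Suc n)"
      then obtain s where s: "s \<in> CycSeqs (Suc n)" and d: "d = Phi (Suc n) s" by auto
      define s0 where "s0 = s(Suc n := 0)"
      have s0: "s0 \<in> CycSeqs n" using s unfolding s0_def CycSeqs_def by auto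
      have "Phi n s0 = Phi n s" unfolding s0_def by (intro Phi_cong) auto
      then have d2: "d = T (s (Suc n)) (Suc n) \<circ> Phi n s0" using d Phi_Suc[OF n1] by simp
      have "Phi n s0 \<in> ncycles n" using s0 Suc.IH by auto
      then obtain xs where xs: "distinct xs" "set xs = {1..n}" "Phi n s0 = cycle_of_list xs"
        using ncycles_set by blast
      have bb: "\<forall>k\<in>{2..Suc n}. 1 \<le> s k \<and> s k \<le> k - 1" using s unfolding CycSeqs_def by simp
      have j: "s (Suc n) \<in> {1..n}" using bspec[OF bb, of "Suc n"] n1 by auto
      then obtain ys where ys: "cycle_of_list (s (Suc n) # ys) = cycle_of_list xs"
        "set (s (Suc n) # ys) = set xs" "distinct (s (Suc n) # ys)"
        using cycle_head[OF xs(1), of "s (Suc n)"] xs(2) by blast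
      have "d = cycle_of_list (Suc n # s (Suc n) # ys)"
        using d2 xs(3) ys(1) by (simp add: transpose_commute)
      moreover have "cycle_of_list (Suc n # s (Suc n) # ys) \<in> ncycles (Suc n)"
        using ys xs(2) by (intro mk_ncycle) auto
      ultimately show "d \<in> ncycles (Suc n)" by simp
    qed
  next
    show "ncycles (Suc n) \<subseteq> Phi (Suc n) ` CycSeqs (Suc n)"
    proof
      fix d assume "d \<in> ncycles (Suc n)"
      then obtain xs where xs: "distinct xs" "set xs = {1..Suc n}" "length xs = Suc n" "d = cycle_of_list xs"
        using ncycles_set by blast
      obtain ys where ys: "cycle_of_list (Suc n # ys) = cycle_of_list xs"
        "set (Suc n # ys) = set xs" "distinct (Suc n # ys)" "length ys + 1 = length xs"
        using cycle_head[OF xs(1), of "Suc n"] xs(2) by auto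
      obtain j zs where jz: "ys = j # zs" using ys(4) xs(3) n1 by (cases ys) auto
      have "set (j # zs) = set (Suc n # ys) - {Suc n}" using ys(3) jz by auto
      also have "\<dots> = {1..Suc n} - {Suc n}" using ys(2) xs(2) by simp
      also have "\<dots> = {1..n}" by auto
      finally have setz: "set (j # zs) = {1..n}" .
      have dz: "distinct (j # zs)" using ys(3) jz by simp
      have "cycle_of_list (j # zs) \<in> ncycles n" using mk_ncycle[OF dz setz] .
      then obtain s0 where s0: "s0 \<in> CycSeqs n" "Phi n s0 = cycle_of_list (j # zs)"
        using Suc.IH by (metis imageE)
      have jn: "j \<in> {1..n}" using setz by auto
      define s where "s = s0(Suc n := j)"
      have sC: "s \<in> CycSeqs (Suc n)" using s0(1) jn n1 unfolding s_def CycSeqs_def by auto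
      have "Phi n s = Phi n s0" unfolding s_def by (intro Phi_cong) auto
      then have "Phi (Suc n) s = T j (Suc n) \<circ> cycle_of_list (j # zs)"
        using Phi_Suc[OF n1, of s] s0(2) unfolding s_def by simp
      also have "\<dots> = d" using xs(4) ys(1) jz by (simp add: transpose_commute)
      finally show "d \<in> Phi (Suc n) ` CycSeqs (Suc n)" using sC by force
    qed
  qed
qed

theorem mainTheorem5:
  fixes n :: nat
  assumes "n \<ge> 2"
  shows
   "(\<forall>s\<in>Seqs n. \<forall>s'\<in>Seqs n. differ_one n s s' \<longrightarrow>
       (\<exists>\<sigma>. \<sigma> permutes {1..n} \<and> Phi n s' = \<sigma> \<circ> Phi n s \<and>
            (is_kcycle n 2 \<sigma> \<or> is_kcycle n 3 \<sigma>)))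
  \<and> (\<forall>s\<in>CycSeqs n. \<forall>s'\<in>CycSeqs n. differ_one n s s' \<longrightarrow>
       (\<exists>\<sigma>. \<sigma> permutes {1..n} \<and> Phi n s' = \<sigma> \<circ> Phi n s \<and> is_kcycle n 3 \<sigma>))
  \<and> (\<forall>L. distinct L \<and> set L = CycSeqs n \<and>
         (\<forall>i. Suc i < length L \<longrightarrow> differ_one n (L ! i) (L ! Suc i)) \<longrightarrow>
       distinct (map (Phi n) L) \<and> set (map (Phi n) L) = ncycles n \<and>
       (\<forall>i. Suc i < length L \<longrightarrow>
          (\<exists>\<sigma>. \<sigma> permutes {1..n} \<and> is_kcycle n 3 \<sigma> \<and>
               Phi n (L ! Suc i) = \<sigma> \<circ> Phi n (L ! i))))"
proof -
  have P1: "\<forall>s\<in>Seqs n. \<forall>s'\<in>Seqs n. differ_one n s s' \<longrightarrow>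
       (\<exists>\<sigma>. \<sigma> permutes {1..n} \<and> Phi n s' = \<sigma> \<circ> Phi n s \<and>
            (is_kcycle n 2 \<sigma> \<or> is_kcycle n 3 \<sigma>))"
    using step_seq by blast
  have sub: "CycSeqs n \<subseteq> Seqs n" unfolding CycSeqs_def Seqs_def by auto
  have P2: "\<forall>s\<in>CycSeqs n. \<forall>s'\<in>CycSeqs n. differ_one n s s' \<longrightarrow>
       (\<exists>\<sigma>. \<sigma> permutes {1..n} \<and> Phi n s' = \<sigma> \<circ> Phi n s \<and> is_kcycle n 3 \<sigma>)"
  proof (intro ballI impI)
    fix s s' assume s: "s \<in> CycSeqs n" and s': "s' \<in> CycSeqs n" and df: "differ_one n s s'"
    obtain \<sigma> k where sk: "\<sigma> permutes {1..n}" "Phi n s' = \<sigma> \<circ> Phi n s"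
       "k \<in> {2..n}" "s k \<noteq> k \<and> s' k \<noteq> k \<longrightarrow> is_kcycle n 3 \<sigma>"
      using step_seq[of s n s'] s s' sub df by blast
    have "s k \<noteq> k \<and> s' k \<noteq> k" using s s' sk(3) unfolding CycSeqs_def by fastforce
    then show "\<exists>\<sigma>. \<sigma> permutes {1..n} \<and> Phi n s' = \<sigma> \<circ> Phi n s \<and> is_kcycle n 3 \<sigma>"
      using sk by blast
  qed
  have inj: "inj_on (Phi n) (CycSeqs n)"
  proof
    fix s s' assume s: "s \<in> CycSeqs n" and s': "s' \<in> CycSeqs n" and e: "Phi n s = Phi n s'"
    have eqk: "\<forall>k\<in>{2..n}. s k = s' k"
      using Phi_inj[OF seq_bounds seq_bounds e] s s' sub by auto
    show "s = s'"
    proof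
      fix k show "s k = s' k"
      proof (cases "k \<in> {2..n}")
        case True then show ?thesis using eqk by blast
      next
        case False
        have "s k = 0" using s False unfolding CycSeqs_def by blast
        moreover have "s' k = 0" using s' False unfolding CycSeqs_def by blast
        ultimately show ?thesis by simp
      qed
    qed
  qed
  have img: "Phi n ` CycSeqs n = ncycles n" using Phi_image assms by simp
  have P3: "\<forall>L. distinct L \<and> set L = CycSeqs n \<and>
         (\<forall>i. Suc i < length L \<longrightarrow> differ_one n (L ! i) (L ! Suc i)) \<longrightarrow>
       distinct (map (Phi n) L) \<and> set (map (Phi n) L) = ncycles n \<and>
       (\<forall>i. Suc i < length L \<longrightarrow>
          (\<exists>\<sigma>. \<sigma> permutes {1..n} \<and> is_kcycle n 3 \<sigma> \<and>
               Phi n (L ! Suc i) = \<sigma> \<circ> Phi n (L ! i)))"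
  proof (intro allI impI conjI)
    fix L assume L: "distinct L \<and> set L = CycSeqs n \<and>
         (\<forall>i. Suc i < length L \<longrightarrow> differ_one n (L ! i) (L ! Suc i))"
    show "distinct (map (Phi n) L)" using L inj by (simp add: distinct_map)
    show "set (map (Phi n) L) = ncycles n" using L img by simp
    fix i assume i: "Suc i < length L"
    have "L ! i \<in> CycSeqs n" "L ! Suc i \<in> CycSeqs n" using L i nth_mem[of i L] nth_mem[of "Suc i" L] by auto
    then show "\<exists>\<sigma>. \<sigma> permutes {1..n} \<and> is_kcycle n 3 \<sigma> \<and> Phi n (L ! Suc i) = \<sigma> \<circ> Phi n (L ! i)"
      using P2 L i by blast
  qed
  show ?thesis using P1 P2 P3 by blast
qed

end
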